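(* In the single-block Spice setting, at any iteration $k$ (with $\mathsf{R}(x^k)>0$ and $\mathsf{R}(\bar x^k)>0$), the matrices satisfy $H_k=Q_kM_k^{-1}\succ 0$ and $G_k=Q_k^\top+Q_k-M_k^\top H_k M_k\succ 0$ (with $H_k$, $G_k$ equal to the explicit matrices given in the context), and $$\rho\,[f(x)-f(\bar x^k)]+(w-\bar w^k)^\top\tfrac{1}{\eta_k}\Gamma(\bar w^k)\ \ge\ \tfrac12\|\bar w^k-w^k\|_{G_k}^2+\tfrac12\big(\|w-w^{k+1}\|_{H_k}^2-\|w-w^k\|_{H_k}^2\big)\qquad\forall\,w=(x,\lambda)\in\Omega .$$
   Context: Single-block Spice setting. Let $\mathcal{X}\subseteq\mathbb{R}^n$ be nonempty closed convex, $f:\mathbb{R}^n\to\mathbb{R}$ convex, $\phi_1,\dots,\phi_p:\mathbb{R}^n\to\mathbb{R}$ convex and continuously differentiable, $\Phi(x)=(\phi_1(x),\dots,\phi_p(x))^\top$, $\mathcal{D}\Phi(x)\in\mathbb{R}^{p\times n}$ its Jacobian. Let $\mathcal{Z}=\mathbb{R}^p_+$, $\Omega=\mathcal{X}\times\mathcal{Z}$, $w=(x,\lambda)$, $\Gamma(w)=(\mathcal{D}\Phi(x)^\top\lambda,\,-\Phi(x))$. For a symmetric matrix $A$, $\|v\|_A^2:=v^\top A v$; the norm of a matrix is the spectral norm; $\mathsf{R}(x):=\|\mathcal{D}\Phi(x)\|^2$. The scaled Lagrangian is $\mathcal{L}(x,\lambda,\rho,\eta)=\rho f(x)+\frac1\eta\lambda^\top\Phi(x)$.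 Fix $\rho>0$, $\mu>1$, a starting point $w^0=(x^0,\lambda^0)\in\Omega$ and positive numbers $\eta_0,\eta_1,\dots$. Given $w^k=(x^k,\lambda^k)\in\Omega$, iteration $k$ is: $r_k=\frac{1}{\eta_k}\sqrt{\mathsf{R}(x^k)}$; $\bar x^k=\arg\min_{x\in\mathcal{X}}\{\mathcal{L}(x,\lambda^k,\rho,\eta_k)+\frac{r_k}{2}\|x-x^k\|^2\}$; $s_k=\frac{\mu\,\mathsf{R}(\bar x^k)}{\eta_k\sqrt{\mathsf{R}(x^k)}}$; $\bar\lambda^k=\arg\max_{\lambda\in\mathcal{Z}}\{\mathcal{L}(\bar x^k,\lambda,\rho,\eta_k)-\frac{s_k}{2}\|\lambda-\lambda^k\|^2\}$ (equivalently $\bar\lambda^k=\max\{\lambda^k+\frac{1}{\eta_k s_k}\Phi(\bar x^k),0\}$ componentwise); $\bar w^k=(\bar x^k,\bar\lambda^k)$; and $w^{k+1}=w^k-M_k(w^k-\bar w^k)$ where $M_k=\begin{pmatrix}I_n & -\frac{1}{\eta_k r_k}\mathcal{D}\Phi(\bar x^k)^\top\\ 0 & I_p\end{pmatrix}$. It is assumed throughout that $\mathsf{R}(x^k)>0$ and $\mathsf{R}(\bar x^k)>0$ for all $k$. Define $Q_k=\begin{pmatrix} r_kI_n & -\frac{1}{\eta_k}\mathcal{D}\Phi(\bar x^k)^\top\\ 0 & s_kI_p\end{pmatrix}$, $H_k=\begin{pmatrix} r_kI_n&0\\0&s_kI_p\end{pmatrix}$, $G_k=\begin{pmatrix} r_kI_n&0\\0&s_kI_p-\frac{1}{\eta_k^2r_k}\mathcal{D}\Phi(\bar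 x^k)\mathcal{D}\Phi(\bar x^k)^\top\end{pmatrix}$. *)

theory Defs
  imports "HOL-Analysis.Analysis"
begin

text \<open>Vectors w = (x, lambda) in R^(n+p) are represented as real^('n + 'p),
  block matrices as real^('n+'p)^('n+'p).\<close>

definition join :: "real^'n \<Rightarrow> real^'p \<Rightarrow> real^('n + 'p)" where
  "join x l = (\<chi> i. case i of Inl a \<Rightarrow> x $ a | Inr b \<Rightarrow> l $ b)"

definition blockmat ::
  "real^'n^'n \<Rightarrow> real^'p^'n \<Rightarrow> real^'n^'p \<Rightarrow> real^'p^'p \<Rightarrow> real^('n + 'p)^('n + 'p)" where
  "blockmat A B C D = (\<chi> i j. case i of
      Inl a \<Rightarrow> (case j of Inl c \<Rightarrow> A $ a $ c | Inr d \<Rightarrow> B $ a $ d)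
    | Inr b \<Rightarrow> (case j of Inl c \<Rightarrow> C $ b $ c | Inr d \<Rightarrow> D $ b $ d))"

definition pos_def :: "real^'m^'m \<Rightarrow> bool" where
  "pos_def A \<longleftrightarrow> transpose A = A \<and> (\<forall>v. v \<noteq> 0 \<longrightarrow> v \<bullet> (A *v v) > 0)"

definition wnorm_sq :: "real^'m^'m \<Rightarrow> real^'m \<Rightarrow> real" where
  "wnorm_sq A v = v \<bullet> (A *v v)"

definition specnorm :: "real^'n^'m \<Rightarrow> real" where
  "specnorm A = onorm (\<lambda>v. A *v v)"

definition Rfun :: "('x \<Rightarrow> real^'n^'p) \<Rightarrow> 'x \<Rightarrow> real" where
  "Rfun DPhi x = (specnorm (DPhi x))\<^sup>2"

definition Lag :: "(real^'n \<Rightarrow> real) \<Rightarrow> (real^'n \<Rightarrow> real^'p)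
    \<Rightarrow> real^'n \<Rightarrow> real^'p \<Rightarrow> real \<Rightarrow> real \<Rightarrow> real" where
  "Lag f Phi x l \<rho> \<eta> = \<rho> * f x + (1 / \<eta>) * (l \<bullet> Phi x)"

definition Zset :: "(real^'p) set" where
  "Zset = {l. \<forall>i. 0 \<le> l $ i}"

end

theory Submission
  imports Defs
begin

lemma sum_Plus_UNIV: "(\<Sum>i\<in>(UNIV::('a::finite+'b::finite) set). g i) = (\<Sum>a\<in>UNIV. g (Inl a)) + (\<Sum>b\<in>UNIV. g (Inr b))"
  by (subst UNIV_Plus_UNIV[symmetric], subst sum.Plus) (auto simp: o_def)

lemma join_nth[simp]: "join x l $ Inl a = x $ a" "join x l $ Inr b = l $ b"
  by (simp_all add: join_def)

lemma blockmat_nth[simp]: "blockmat A B C D $ Inl a $ Inl c = A $ a $ c"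
  "blockmat A B C D $ Inl a $ Inr d = B $ a $ d"
  "blockmat A B C D $ Inr b $ Inl c = C $ b $ c"
  "blockmat A B C D $ Inr b $ Inr d = D $ b $ d"
  by (simp_all add: blockmat_def)

lemma join_eq_iff: "join x l = join y m \<longleftrightarrow> x = y \<and> l = m"
  by (auto simp: vec_eq_iff split_sum_all)  

lemma inner_join: "join x l \<bullet> join y m = x \<bullet> y + l \<bullet> m"
  by (simp add: inner_vec_def sum_Plus_UNIV)

lemma join_diff: "join x l - join y m = join (x - y) (l - m)"
  by (simp add: vec_eq_iff split_sum_all)

lemma join_zero: "join 0 0 = 0" by (simp add: vec_eq_iff split_sum_all)

lemma blockmat_mv: "blockmat A B C D *v join x l = join (A *v x + B *v l) (C *v x + D *v l)"
  by (simp add: vec_eq_iff split_sum_all matrix_vector_mult_def sum_Plus_UNIV)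

lemma blockmat_mult: "blockmat A B C D ** blockmat A' B' C' D' =
   blockmat (A**A'+B**C') (A**B'+B**D') (C**A'+D**C') (C**B'+D**D')"
  by (simp add: vec_eq_iff split_sum_all matrix_matrix_mult_def sum_Plus_UNIV)

lemma blockmat_transpose: "transpose (blockmat A B C D) = blockmat (transpose A) (transpose C) (transpose B) (transpose D)"
  by (simp add: vec_eq_iff split_sum_all transpose_def)

lemma blockmat_add: "blockmat A B C D + blockmat A' B' C' D' = blockmat (A+A') (B+B') (C+C') (D+D')"
  by (simp add: vec_eq_iff split_sum_all)

lemma blockmat_diff: "blockmat A B C D - blockmat A' B' C' D' = blockmat (A-A') (B-B') (C-C') (D-D')"
  by (simp add: vec_eq_iff split_sum_all)

lemma mat1_block: "(mat 1 :: real^('n::finite+'p::finite)^('n+'p)) = blockmat (mat 1) 0 0 (mat 1)"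
  by (simp add: vec_eq_iff split_sum_all mat_def)

lemma vec_join: "\<exists>x l. w = join x l"
  by (rule exI[of _ "\<chi> a. w $ Inl a"], rule exI[of _ "\<chi> b. w $ Inr b"]) (simp add: vec_eq_iff split_sum_all)


lemma scaleR_mmult_left[simp]: "(k *\<^sub>R A) ** (B::real^'c^'b) = k *\<^sub>R (A ** B)" for A :: "real^'b^'a"
  by (simp add: vec_eq_iff matrix_matrix_mult_def sum_distrib_left mult.assoc)
lemma scaleR_mmult_right[simp]: "A ** (k *\<^sub>R (B::real^'c^'b)) = k *\<^sub>R (A ** B)" for A :: "real^'b^'a"
  by (simp add: vec_eq_iff matrix_matrix_mult_def sum_distrib_left mult.left_commute)
lemma mmult_zero[simp]: "(0::real^'b^'a) ** (B::real^'c^'b) = 0" "(A::real^'b^'a) ** (0::real^'c^'b) = 0"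
  by (simp_all add: vec_eq_iff matrix_matrix_mult_def)
lemma uminus_mmult[simp]: "(- A) ** (B::real^'c^'b) = - (A ** B)" "A ** (- B) = - (A ** B)" for A :: "real^'b^'a"
  by (simp_all add: vec_eq_iff matrix_matrix_mult_def sum_negf)
lemma transpose_uminus[simp]: "transpose (- A) = - transpose (A::real^'b^'a)"
  by (simp add: vec_eq_iff transpose_def)
lemma transpose_zero[simp]: "transpose (0::real^'b^'a) = 0"
  by (simp add: vec_eq_iff transpose_def)

lemma matalg:
  fixes D :: "real^'n::finite^'p::finite" and r s \<eta> :: real
  assumes r: "r > 0" and \<eta>: "\<eta> > 0"
  defines "M \<equiv> blockmat (mat 1) (- ((1 / (\<eta> * r)) *\<^sub>R transpose D)) 0 (mat 1)"
    and "Q \<equiv> blockmat (r *\<^sub>R mat 1) (- ((1 / \<eta>) *\<^sub>R transpose D)) 0 (s *\<^sub>R mat 1)"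
    and "H \<equiv> blockmat (r *\<^sub>R mat 1) 0 0 (s *\<^sub>R mat 1)"
    and "G \<equiv> blockmat (r *\<^sub>R mat 1) 0 0
               (s *\<^sub>R mat 1 - (1 / (\<eta>\<^sup>2 * r)) *\<^sub>R (D ** transpose D))"
  shows "invertible M \<and> H = Q ** matrix_inv M \<and> G = transpose Q + Q - transpose M ** H ** M"
proof -
  define Mi where "Mi = blockmat (mat 1) ((1 / (\<eta> * r)) *\<^sub>R transpose D) 0 (mat 1 :: real^'p^'p)"
  have 1: "M ** Mi = mat 1" "Mi ** M = mat 1"
    by (simp_all add: M_def Mi_def blockmat_mult mat1_block)
  have inv: "invertible M" using 1 invertible_def by blast
  have "M ** matrix_inv M = mat 1 \<and> matrix_inv M ** M = mat 1"
    unfolding matrix_inv_def by (rule someI[of _ Mi]) (use 1 in auto)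
  then have "matrix_inv M = Mi"
    by (metis 1 matrix_mul_assoc matrix_mul_lid matrix_mul_rid)
  moreover have "H = Q ** Mi"
    using r by (simp add: H_def Q_def Mi_def blockmat_mult)
  moreover have "G = transpose Q + Q - transpose M ** H ** M"
    using r \<eta> apply (simp add: G_def H_def Q_def M_def blockmat_mult blockmat_transpose blockmat_add blockmat_diff transpose_scalar power2_eq_square algebra_simps)
    by (simp add: vec_eq_iff split_sum_all mat_def algebra_simps)
  ultimately show ?thesis using inv by simp
qed


lemma xvi:
  fixes X :: "(real^'n::finite) set" and f :: "real^'n \<Rightarrow> real"
    and Phi :: "real^'n \<Rightarrow> real^'p::finite" and D :: "real^'n^'p"
    and \<rho> \<eta> r :: real and xk xbar x :: "real^'n" and lk :: "real^'p"
  assumes cX: "convex X" and f_cvx: "convex_on UNIV f"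
    and der: "(Phi has_derivative (\<lambda>h. D *v h)) (at xbar)"
    and \<rho>: "\<rho> > 0" and \<eta>: "\<eta> > 0" and xbar: "xbar \<in> X" and x: "x \<in> X"
    and opt: "\<forall>x\<in>X. Lag f Phi xbar lk \<rho> \<eta> + r / 2 * (norm (xbar - xk))\<^sup>2
             \<le> Lag f Phi x lk \<rho> \<eta> + r / 2 * (norm (x - xk))\<^sup>2"
  shows "0 \<le> \<rho> * (f x - f xbar) + (1/\<eta>) * (lk \<bullet> (D *v (x - xbar))) + r * ((xbar - xk) \<bullet> (x - xbar))"
proof -
  define d where "d = x - xbar"
  define \<psi> where "\<psi> t = lk \<bullet> Phi (xbar + t *\<^sub>R d)" for t :: real
  define c where "c = lk \<bullet> (D *v d)"
  have d1: "((\<lambda>t::real. xbar + t *\<^sub>R d) has_derivative (\<lambda>t. t *\<^sub>R d)) (at 0)"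
    by (auto intro!: derivative_eq_intros)
  have d2: "(Phi has_derivative (\<lambda>h. D *v h)) (at (xbar + (0::real) *\<^sub>R d))"
    using der by simp
  have "((\<lambda>t. Phi (xbar + t *\<^sub>R d)) has_derivative (\<lambda>t. D *v (t *\<^sub>R d))) (at 0)"
    using has_derivative_compose[OF d1 d2] .
  then have "(\<psi> has_derivative (\<lambda>t. lk \<bullet> (D *v (t *\<^sub>R d)))) (at 0)"
    unfolding \<psi>_def by (rule has_derivative_inner_right)
  moreover have "(\<lambda>t. lk \<bullet> (D *v (t *\<^sub>R d))) = (*) c"
    by (auto simp: c_def matrix_vector_mult_scaleR fun_eq_iff)
  ultimately have "(\<psi> has_real_derivative c) (at 0)"
    by (simp add: has_field_derivative_def)
  then have "((\<lambda>h. (\<psi> (0 + h) - \<psi> 0) / h) \<longlongrightarrow> c) (at 0)"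
    by (simp add: DERIV_def)
  then have lim1: "((\<lambda>h. (\<psi> h - \<psi> 0) / h) \<longlongrightarrow> c) (at_right 0)"
    by (simp add: filterlim_at_split)
  define g where "g t = \<rho> * (f x - f xbar) + (1/\<eta>) * ((\<psi> t - \<psi> 0) / t) + r * ((xbar - xk) \<bullet> d) + r / 2 * t * (d \<bullet> d)" for t
  have lim: "(g \<longlongrightarrow> \<rho> * (f x - f xbar) + (1/\<eta>) * c + r * ((xbar - xk) \<bullet> d) + r / 2 * 0 * (d \<bullet> d)) (at_right 0)"
    unfolding g_def by (intro tendsto_intros lim1)
  have ev: "eventually (\<lambda>t. 0 \<le> g t) (at_right 0)"
  proof (rule eventually_at_rightI[where b=1])
    fix t :: real assume t: "t \<in> {0<..<1}"
    have xt: "xbar + t *\<^sub>R d = (1 - t) *\<^sub>R xbar + t *\<^sub>R x"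
      by (simp add: d_def algebra_simps)
    have xtX: "xbar + t *\<^sub>R d \<in> X"
      unfolding xt using t by (intro convexD[OF cX xbar x]) auto
    have fx: "f (xbar + t *\<^sub>R d) \<le> (1 - t) * f xbar + t * f x"
      unfolding xt using t by (intro convex_onD[OF f_cvx]) auto
    have o: "\<rho> * f xbar + 1/\<eta> * \<psi> 0 + r / 2 * (norm (xbar - xk))\<^sup>2
        \<le> \<rho> * f (xbar + t *\<^sub>R d) + 1/\<eta> * \<psi> t + r / 2 * (norm (xbar + t *\<^sub>R d - xk))\<^sup>2"
      using opt xtX by (simp add: Lag_def \<psi>_def)
    have n: "(norm (xbar + t *\<^sub>R d - xk))\<^sup>2 = (norm (xbar - xk))\<^sup>2 + 2 * t * ((xbar - xk) \<bullet> d) + t\<^sup>2 * (d \<bullet> d)"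
      unfolding power2_norm_eq_inner by (simp add: algebra_simps inner_commute power2_eq_square)
    have fx': "\<rho> * f (xbar + t *\<^sub>R d) \<le> \<rho> * f xbar + t * (\<rho> * (f x - f xbar))"
      using mult_left_mono[OF fx, of \<rho>] \<rho> by (simp add: algebra_simps)
    have "0 \<le> t * (\<rho> * (f x - f xbar)) + 1/\<eta> * (\<psi> t - \<psi> 0) + r * t * ((xbar - xk) \<bullet> d) + r / 2 * t\<^sup>2 * (d \<bullet> d)"
      using o n fx' by (simp add: algebra_simps)
    also have "\<dots> = t * g t"
      using t \<eta> by (simp add: g_def field_simps power2_eq_square)
    finally show "0 \<le> g t" using t by (simp add: zero_le_mult_iff)
  qed simp
  have "0 \<le> \<rho> * (f x - f xbar) + (1/\<eta>) * c + r * ((xbar - xk) \<bullet> d) + r / 2 * 0 * (d \<bullet> d)"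
    by (rule tendsto_lowerbound[OF lim ev]) simp
  then show ?thesis by (simp add: c_def d_def)
qed


lemma small_le: fixes A B :: real assumes "\<And>t. 0 < t \<Longrightarrow> t \<le> 1 \<Longrightarrow> A \<le> t * B" shows "A \<le> 0"
proof (rule ccontr)
  assume A: "\<not> A \<le> 0"
  show False
  proof (cases "B \<le> 0")
    case True then show False using assms[of 1] A by simp
  next
    case False
    define t where "t = min 1 (A / (2 * B))"
    have t: "0 < t" "t \<le> 1" using A False by (auto simp: t_def)
    have "t * B \<le> A / (2 * B) * B" using False by (intro mult_right_mono) (auto simp: t_def)
    also have "\<dots> = A / 2" using False by simp
    finally show False using assms[OF t] A by simp
  qed
qed

lemma lvi:
  fixes Phi :: "real^'n::finite \<Rightarrow> real^'p::finite" and f :: "real^'n \<Rightarrow> real"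
    and \<rho> \<eta> s :: real and xbar :: "real^'n" and lk lbar l :: "real^'p"
  assumes \<eta>: "\<eta> > 0" and lbar: "lbar \<in> Zset" and l: "l \<in> Zset"
    and opt: "\<forall>l\<in>Zset. Lag f Phi xbar l \<rho> \<eta> - s / 2 * (norm (l - lk))\<^sup>2
             \<le> Lag f Phi xbar lbar \<rho> \<eta> - s / 2 * (norm (lbar - lk))\<^sup>2"
  shows "0 \<le> s * ((l - lbar) \<bullet> (lbar - lk)) - (1/\<eta>) * ((l - lbar) \<bullet> Phi xbar)"
proof -
  define e where "e = l - lbar"
  have "(1/\<eta>) * (e \<bullet> Phi xbar) - s * (e \<bullet> (lbar - lk)) \<le> 0"
  proof (rule small_le)
    fix t :: real assume t: "0 < t" "t \<le> 1"
    have ltZ: "lbar + t *\<^sub>R e \<in> Zset"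
    proof -
      have "\<forall>i. 0 \<le> (1 - t) * lbar $ i + t * l $ i"
        using lbar l t by (auto simp: Zset_def intro!: add_nonneg_nonneg mult_nonneg_nonneg)
      then show ?thesis by (simp add: Zset_def e_def algebra_simps)
    qed
    have o: "1/\<eta> * ((lbar + t *\<^sub>R e) \<bullet> Phi xbar) - s / 2 * (norm (lbar + t *\<^sub>R e - lk))\<^sup>2
             \<le> 1/\<eta> * (lbar \<bullet> Phi xbar) - s / 2 * (norm (lbar - lk))\<^sup>2"
      using opt ltZ by (simp add: Lag_def)
    have n: "(norm (lbar + t *\<^sub>R e - lk))\<^sup>2 = (norm (lbar - lk))\<^sup>2 + 2 * t * ((lbar - lk) \<bullet> e) + t\<^sup>2 * (e \<bullet> e)"
      unfolding power2_norm_eq_inner by (simp add: algebra_simps inner_commute power2_eq_square)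
    have "t * ((1/\<eta>) * (e \<bullet> Phi xbar) - s * (e \<bullet> (lbar - lk))) \<le> t * (t * (s / 2 * (e \<bullet> e)))"
    proof -
      have i1: "(lbar + t *\<^sub>R e) \<bullet> Phi xbar = lbar \<bullet> Phi xbar + t * (e \<bullet> Phi xbar)"
        by (simp add: inner_add_left)
      have i2: "(lbar - lk) \<bullet> e = e \<bullet> (lbar - lk)" by (rule inner_commute)
      have aux: "\<And>B P N a q::real. (1/\<eta>)*(B + t*P) - s/2*(N + 2*t*a + t^2*q) \<le> (1/\<eta>)*B - s/2*N \<Longrightarrow> t*((1/\<eta>)*P - s*a) \<le> t*(t*(s/2*q))"
      proof -
        fix B P N a q :: real
        assume h: "(1/\<eta>)*(B + t*P) - s/2*(N + 2*t*a + t^2*q) \<le> (1/\<eta>)*B - s/2*N"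
        have eq: "((1/\<eta>)*(B + t*P) - s/2*(N + 2*t*a + t^2*q)) - ((1/\<eta>)*B - s/2*N) = t*((1/\<eta>)*P - s*a) - t*(t*(s/2*q))"
          by (simp add: algebra_simps power2_eq_square)
        show "t*((1/\<eta>)*P - s*a) \<le> t*(t*(s/2*q))" using h eq by linarith
      qed
      show ?thesis using o unfolding n i1 i2 by (rule aux)
    qed
    then show "(1/\<eta>) * (e \<bullet> Phi xbar) - s * (e \<bullet> (lbar - lk)) \<le> t * (s / 2 * (e \<bullet> e))"
      using t by simp
  qed
  then show ?thesis by (simp add: e_def)
qed


lemma scaleR_mv[simp]: "(k *\<^sub>R A) *v x = k *\<^sub>R (A *v x)" for A :: "real^'a^'b"
  by (simp add: vec_eq_iff matrix_vector_mult_def sum_distrib_left mult.assoc)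
lemma uminus_mv[simp]: "(- A) *v x = - (A *v x)" for A :: "real^'a^'b"
  by (simp add: vec_eq_iff matrix_vector_mult_def sum_negf)
lemma diff_mv[simp]: "(A - B) *v x = A *v x - B *v x" for A :: "real^'a^'b"
  by (simp add: vec_eq_iff matrix_vector_mult_def sum_subtractf left_diff_distrib)
lemma mult_mv[simp]: "(A ** B) *v x = A *v (B *v x)" for A :: "real^'a^'b"
  by (simp add: matrix_vector_mul_assoc)
lemma transpose_diff[simp]: "transpose (A - B) = transpose A - transpose (B::real^'a^'b)"
  by (simp add: vec_eq_iff transpose_def)
lemma inner_transpose: "l \<bullet> (D *v y) = (transpose D *v l) \<bullet> y" for D :: "real^'a::finite^'b::finite"
  by (metis dot_lmul_matrix transpose_matrix_vector)

lemma transpose_bound: "norm (transpose D *v l) \<le> specnorm D * norm l" for D :: "real^'a::finite^'b::finite"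
proof -
  define y where "y = transpose D *v l"
  have bl: "bounded_linear (\<lambda>v. D *v v)" by simp
  have "norm y * norm y = l \<bullet> (D *v y)"
    by (simp add: inner_transpose y_def flip: power2_norm_eq_inner power2_eq_square)
  also have "\<dots> \<le> norm l * norm (D *v y)" by (rule norm_cauchy_schwarz)
  also have "\<dots> \<le> norm l * (specnorm D * norm y)"
    unfolding specnorm_def by (intro mult_left_mono onorm[OF bl]) auto
  finally have h: "norm y * norm y \<le> (specnorm D * norm l) * norm y" by (simp add: algebra_simps)
  show ?thesis
  proof (cases "norm y = 0")
    case True then show ?thesis unfolding y_def
      using onorm_pos_le[OF bl] by (simp add: specnorm_def)
  next
    case False then have "norm y > 0" by simp
    then show ?thesis using h unfolding y_def[symmetric] by simp
  qed
qed

lemma transpose_bound2: "(transpose D *v l) \<bullet> (transpose D *v l) \<le> (specnorm D)\<^sup>2 * (l \<bullet> l)" for D :: "real^'a::finite^'b::finite"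
proof -
  have "(norm (transpose D *v l))\<^sup>2 \<le> (specnorm D * norm l)\<^sup>2"
    by (intro power_mono transpose_bound) auto
  then show ?thesis by (simp add: power2_norm_eq_inner power_mult_distrib)
qed

lemma ident:
  fixes u a T :: "real^'n::finite" and v b :: "real^'p::finite" and r s \<eta> :: real
  assumes r: "r > 0" and \<eta>: "\<eta> > 0"
  shows "1/2*(r*((-a)\<bullet>(-a)) + s*((-b)\<bullet>(-b)) - 1/(\<eta>\<^sup>2*r)*((-T)\<bullet>(-T)))
     + 1/2*((r*((u - (1/(\<eta>*r)) *\<^sub>R T)\<bullet>(u - (1/(\<eta>*r)) *\<^sub>R T)) + s*(v\<bullet>v)) - (r*((u-a)\<bullet>(u-a)) + s*((v-b)\<bullet>(v-b))))
   = r*(u\<bullet>a) + s*(v\<bullet>b) - (1/\<eta>)*(u\<bullet>T)"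
  using r \<eta> by (simp add: inner_diff_left inner_diff_right inner_commute field_simps power2_eq_square)


theorem lemma3p2:
  fixes X :: "(real^'n) set" and f :: "real^'n \<Rightarrow> real"
    and Phi :: "real^'n \<Rightarrow> real^'p" and DPhi :: "real^'n \<Rightarrow> real^'n^'p"
    and \<rho> \<mu> \<eta> r s :: real
    and xk xbar :: "real^'n" and lk lbar :: "real^'p" and wk1 :: "real^('n + 'p)"
  assumes X: "X \<noteq> {}" "closed X" "convex X"
    and f_cvx: "convex_on UNIV f"
    and Phi_cvx: "\<And>i. convex_on UNIV (\<lambda>x. Phi x $ i)"
    and Phi_deriv: "\<And>x. (Phi has_derivative (\<lambda>h. DPhi x *v h)) (at x)"
    and DPhi_cont: "continuous_on UNIV DPhi"
    and r_def: "r = 1 / \<eta> * sqrt (Rfun DPhi xk)"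
    and s_def: "s = \<mu> * Rfun DPhi xbar / (\<eta> * sqrt (Rfun DPhi xk))"
    and \<rho>: "\<rho> > 0" and \<mu>: "\<mu> > 1" and \<eta>: "\<eta> > 0"
    and wk: "xk \<in> X" "lk \<in> Zset"
    and Rpos: "Rfun DPhi xk > 0" "Rfun DPhi xbar > 0"
    and xbar: "xbar \<in> X"
      "\<forall>x\<in>X. Lag f Phi xbar lk \<rho> \<eta> + r / 2 * (norm (xbar - xk))\<^sup>2
             \<le> Lag f Phi x lk \<rho> \<eta> + r / 2 * (norm (x - xk))\<^sup>2"
    and lbar: "lbar \<in> Zset"
      "\<forall>l\<in>Zset. Lag f Phi xbar l \<rho> \<eta>
                  - s / 2 * (norm (l - lk))\<^sup>2
             \<le> Lag f Phi xbar lbar \<rho> \<eta>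
                  - s / 2 * (norm (lbar - lk))\<^sup>2"
  defines "M \<equiv> blockmat (mat 1) (- ((1 / (\<eta> * r)) *\<^sub>R transpose (DPhi xbar))) 0 (mat 1)"
    and "Q \<equiv> blockmat (r *\<^sub>R mat 1) (- ((1 / \<eta>) *\<^sub>R transpose (DPhi xbar))) 0 (s *\<^sub>R mat 1)"
    and "H \<equiv> blockmat (r *\<^sub>R mat 1) 0 0 (s *\<^sub>R mat 1)"
    and "G \<equiv> blockmat (r *\<^sub>R mat 1) 0 0
               (s *\<^sub>R mat 1 - (1 / (\<eta>\<^sup>2 * r)) *\<^sub>R (DPhi xbar ** transpose (DPhi xbar)))"
  assumes wk1_def: "wk1 = join xk lk - M *v (join xk lk - join xbar lbar)"
  shows "invertible M \<and> H = Q ** matrix_inv M \<and> pos_def H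
       \<and> G = transpose Q + Q - transpose M ** H ** M \<and> pos_def G
       \<and> (\<forall>x\<in>X. \<forall>l\<in>Zset.
            \<rho> * (f x - f xbar)
            + (1 / \<eta>) * ((x - xbar) \<bullet> (transpose (DPhi xbar) *v lbar) + (l - lbar) \<bullet> (- Phi xbar))
            \<ge> 1/2 * wnorm_sq G (join xbar lbar - join xk lk)
              + 1/2 * (wnorm_sq H (join x l - wk1) - wnorm_sq H (join x l - join xk lk)))"
proof -
  define D where "D = DPhi xbar"
  have sk: "sqrt (Rfun DPhi xk) > 0" using Rpos by simp
  have r: "r > 0" using sk \<eta> by (simp add: r_def)
  have s: "s > 0" using sk \<eta> \<mu> Rpos by (simp add: s_def)
  have mat: "invertible M \<and> H = Q ** matrix_inv M \<and> G = transpose Q + Q - transpose M ** H ** M"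
    using matalg[OF r \<eta>, of "DPhi xbar" s] unfolding M_def Q_def H_def G_def by simp
  have HN: "wnorm_sq H (join p q) = r*(p\<bullet>p) + s*(q\<bullet>q)" for p q
    by (simp add: wnorm_sq_def H_def blockmat_mv inner_join)
  have GN: "wnorm_sq G (join p q) = r*(p\<bullet>p) + s*(q\<bullet>q) - 1/(\<eta>\<^sup>2*r)*((transpose D *v q)\<bullet>(transpose D *v q))" for p q
    by (simp add: wnorm_sq_def G_def blockmat_mv inner_join D_def inner_diff_right inner_transpose[of q])
  have posH: "pos_def H"
    unfolding pos_def_def
  proof (intro conjI allI impI)
    show "transpose H = H" by (simp add: H_def blockmat_transpose transpose_scalar)
    fix w :: "real^('n+'p)" assume w: "w \<noteq> 0"
    obtain p q where w': "w = join p q" using vec_join by blast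
    have "p \<noteq> 0 \<or> q \<noteq> 0" using w w' join_zero by auto
    then have "0 < r*(p\<bullet>p) + s*(q\<bullet>q)"
      using r s by (auto intro: add_pos_nonneg add_nonneg_pos)
    then show "0 < w \<bullet> (H *v w)" using HN[of p q] by (simp add: wnorm_sq_def w')
  qed
  have posG: "pos_def G"
    unfolding pos_def_def
  proof (intro conjI allI impI)
    show "transpose G = G"
      by (simp add: G_def blockmat_transpose transpose_scalar matrix_transpose_mul)
    fix w :: "real^('n+'p)" assume w: "w \<noteq> 0"
    obtain p q where w': "w = join p q" using vec_join by blast
    have pq: "p \<noteq> 0 \<or> q \<noteq> 0" using w w' join_zero by auto
    define R where "R = Rfun DPhi xbar"
    have b: "(transpose D *v q)\<bullet>(transpose D *v q) \<le> R * (q\<bullet>q)"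
      using transpose_bound2[of D q] by (simp add: R_def Rfun_def D_def)
    have c2: "1/(\<eta>\<^sup>2*r) = 1/(\<eta> * sqrt (Rfun DPhi xk))"
      using \<eta> sk by (simp add: r_def power2_eq_square)
    have sR: "s - 1/(\<eta>\<^sup>2*r) * R = (\<mu> - 1) * R / (\<eta> * sqrt (Rfun DPhi xk))"
      unfolding c2 s_def R_def using \<eta> sk by (simp add: field_simps)
    have sR0: "s - 1/(\<eta>\<^sup>2*r) * R > 0" unfolding sR using \<mu> Rpos \<eta> sk R_def by simp
    have c0: "1/(\<eta>\<^sup>2*r) \<ge> 0" using r by simp
    have "s*(q\<bullet>q) - 1/(\<eta>\<^sup>2*r)*((transpose D *v q)\<bullet>(transpose D *v q)) \<ge> (s - 1/(\<eta>\<^sup>2*r) * R) * (q\<bullet>q)"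
      using mult_left_mono[OF b c0] by (simp add: algebra_simps)
    moreover have "(s - 1/(\<eta>\<^sup>2*r) * R) * (q\<bullet>q) \<ge> 0" using sR0 by simp
    moreover have "q \<noteq> 0 \<Longrightarrow> (s - 1/(\<eta>\<^sup>2*r) * R) * (q\<bullet>q) > 0" using sR0 by simp
    moreover have "p \<noteq> 0 \<Longrightarrow> r*(p\<bullet>p) > 0" using r by simp
    moreover have "r*(p\<bullet>p) \<ge> 0" using r by simp
    ultimately have "0 < r*(p\<bullet>p) + s*(q\<bullet>q) - 1/(\<eta>\<^sup>2*r)*((transpose D *v q)\<bullet>(transpose D *v q))"
      using pq by fastforce
    then show "0 < w \<bullet> (G *v w)" using GN[of p q] by (simp add: wnorm_sq_def w')
  qed
  have VI: "\<forall>x\<in>X. \<forall>l\<in>Zset.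
            \<rho> * (f x - f xbar)
            + (1 / \<eta>) * ((x - xbar) \<bullet> (transpose (DPhi xbar) *v lbar) + (l - lbar) \<bullet> (- Phi xbar))
            \<ge> 1/2 * wnorm_sq G (join xbar lbar - join xk lk)
              + 1/2 * (wnorm_sq H (join x l - wk1) - wnorm_sq H (join x l - join xk lk))"
  proof (intro ballI)
    fix x :: "real^'n" and l :: "real^'p" assume x: "x \<in> X" and l: "l \<in> Zset"
    define T where "T = transpose D *v (lk - lbar)"
    define c where "c = 1/(\<eta>*r)"
    have xvi: "0 \<le> \<rho> * (f x - f xbar) + (1/\<eta>) * (lk \<bullet> (D *v (x - xbar))) + r * ((xbar - xk) \<bullet> (x - xbar))"
      unfolding D_def using X(3) f_cvx Phi_deriv \<rho> \<eta> xbar(1) x xbar(2) by (rule xvi)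
    have lvi: "0 \<le> s * ((l - lbar) \<bullet> (lbar - lk)) - (1/\<eta>) * ((l - lbar) \<bullet> Phi xbar)"
      using \<eta> lbar(1) l lbar(2) by (rule lvi)
    have wk1: "join x l - wk1 = join ((x - xbar) - c *\<^sub>R T) (l - lbar)"
      by (simp add: wk1_def M_def join_diff blockmat_mv T_def c_def D_def join_eq_iff algebra_simps)
    have e1: "join xbar lbar - join xk lk = join (-(xk - xbar)) (-(lk - lbar))"
      by (simp add: join_diff)
    have e2: "join x l - join xk lk = join ((x - xbar) - (xk - xbar)) ((l - lbar) - (lk - lbar))"
      by (simp add: join_diff)
    have e3: "transpose D *v (-(lk - lbar)) = - T"
      by (simp add: T_def matrix_vector_mult_diff_distrib)
    have RHS: "1/2 * wnorm_sq G (join xbar lbar - join xk lk)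
              + 1/2 * (wnorm_sq H (join x l - wk1) - wnorm_sq H (join x l - join xk lk))
       = r*((x - xbar)\<bullet>(xk - xbar)) + s*((l - lbar)\<bullet>(lk - lbar)) - (1/\<eta>)*((x - xbar)\<bullet>T)"
      unfolding wk1 e1 e2 GN HN e3 c_def by (rule ident[OF r \<eta>])
    have t1: "lk \<bullet> (D *v (x - xbar)) = (x - xbar) \<bullet> (transpose D *v lbar) + (x - xbar) \<bullet> T"
      by (simp add: inner_transpose[of lk] T_def matrix_vector_mult_diff_distrib inner_diff_right inner_commute)
    have t2: "(xbar - xk) \<bullet> (x - xbar) = - ((x - xbar)\<bullet>(xk - xbar))"
      by (simp add: inner_commute inner_diff_left inner_diff_right)
    have t3: "(l - lbar) \<bullet> (lbar - lk) = - ((l - lbar)\<bullet>(lk - lbar))"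
      by (simp add: inner_diff_right)
    show "\<rho> * (f x - f xbar)
            + (1 / \<eta>) * ((x - xbar) \<bullet> (transpose (DPhi xbar) *v lbar) + (l - lbar) \<bullet> (- Phi xbar))
            \<ge> 1/2 * wnorm_sq G (join xbar lbar - join xk lk)
              + 1/2 * (wnorm_sq H (join x l - wk1) - wnorm_sq H (join x l - join xk lk))"
      unfolding RHS using xvi lvi unfolding t1 t2 t3 D_def[symmetric]
      by (simp add: algebra_simps)
  qed
  show ?thesis using mat posH posG VI by blast
qed

end
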